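(* Let $\xi\in(0,1)$, let $\lambda(x)=\sum_{i\ge2}\lambda_ix^{i-1}$ and $\rho(x)=\sum_{j\ge2}\rho_jx^{j-1}$ be degree distributions, let $a$ be the average right degree ($1/a=\int_0^1\rho(x)dx$), and suppose the maximal degree of $\lambda$ is at most $k_va$ and the maximal degree of $\rho$ is at most $k_ca$, for constants $k_v,k_c$. Then for every $x\in(0,\xi]$, $$\left|\frac{d^2}{dx^2}\bigl[\lambda(1-\rho(1-x))\bigr]\right|\le\frac{k_v^2k_c^2\rho(1-x)^2a^4}{(1-\xi)^2}+\frac{k_vk_c^2\rho(1-x)a^3}{(1-\xi)^2}.$$
   Context: A degree distribution is a polynomial $\gamma(x)=\sum_{k\ge2}\gamma_kx^{k-1}$ with $\gamma_k\ge0$ and $\sum_k\gamma_k=1$; its maximal degree is the largest $k$ with $\gamma_k\ne0$. *)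

theory Defs
  imports "HOL-Analysis.Analysis"
begin

text \<open>A degree distribution is given by its coefficient sequence g, where g k = gamma_k,
  representing the polynomial gamma(x) = sum_{k>=2} gamma_k x^(k-1).\<close>

definition degree_distribution :: "(nat \<Rightarrow> real) \<Rightarrow> bool" where
  "degree_distribution g \<longleftrightarrow>
     finite {k. g k \<noteq> 0} \<and> (\<forall>k. 0 \<le> g k) \<and> g 0 = 0 \<and> g 1 = 0 \<and>
     (\<Sum>k\<in>{k. g k \<noteq> 0}. g k) = 1"

definition dd_eval :: "(nat \<Rightarrow> real) \<Rightarrow> real \<Rightarrow> real" where
  "dd_eval g x = (\<Sum>k\<in>{k. g k \<noteq> 0}. g k * x ^ (k - 1))"

definition max_degree :: "(nat \<Rightarrow> real) \<Rightarrow> nat" where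
  "max_degree g = Max {k. g k \<noteq> 0}"

end

theory Submission
  imports Defs
begin

lemma dsum:
  assumes "finite S"
  shows "((\<lambda>x. \<Sum>k\<in>S. c k * x ^ m k) has_real_derivative
           (\<Sum>k\<in>S. c k * real (m k) * x ^ (m k - 1))) (at x)"
  using assms
  by (auto intro!: derivative_eq_intros DERIV_sum simp: mult.assoc)

lemma dsum_deriv:
  assumes "finite S"
  shows "deriv (\<lambda>x. \<Sum>k\<in>S. c k * x ^ m k) = (\<lambda>x. \<Sum>k\<in>S. c k * real (m k) * x ^ (m k - 1))"
  using DERIV_imp_deriv[OF dsum[OF assms]] by auto

lemma f1:
  assumes "finite A" "finite B"
  shows "((\<lambda>t. (\<Sum>k\<in>A. p k * (1 - (\<Sum>j\<in>B. q j * (1 - t) ^ n j)) ^ m k)) has_real_derivative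
    (\<Sum>k\<in>A. p k * real (m k) * (1 - (\<Sum>j\<in>B. q j * (1 - t) ^ n j)) ^ (m k - 1))
    * (\<Sum>j\<in>B. q j * real (n j) * (1 - t) ^ (n j - 1))) (at t)"
proof -
  have a: "((\<lambda>t. 1 - t) has_real_derivative -1) (at t)"
    by (auto intro!: derivative_eq_intros)
  have b: "((\<lambda>t. 1 - (\<Sum>j\<in>B. q j * (1 - t) ^ n j)) has_real_derivative
     (\<Sum>j\<in>B. q j * real (n j) * (1 - t) ^ (n j - 1))) (at t)"
    using DERIV_diff[OF DERIV_const DERIV_chain2[OF dsum[OF assms(2)] a]] by simp
  show ?thesis using DERIV_chain2[OF dsum[OF assms(1)] b] .
qed


lemma dd_basic:
  assumes "degree_distribution g" "k \<in> {k. g k \<noteq> 0}"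
  shows "2 \<le> k" "k \<le> max_degree g" "0 \<le> g k"
  using assms unfolding degree_distribution_def max_degree_def
  by (auto intro: Max_ge) (metis One_nat_def less_2_cases not_le)

lemma dd_sum1:
  assumes "degree_distribution g"
  shows "(\<Sum>k\<in>{k. g k \<noteq> 0}. g k) = 1" "finite {k. g k \<noteq> 0}"
  using assms unfolding degree_distribution_def by auto

lemma L1_bound:
  assumes g: "degree_distribution g" and v: "0 \<le> v" "v \<le> 1"
  shows "0 \<le> (\<Sum>k\<in>{k. g k \<noteq> 0}. g k * real (k - 1) * v ^ (k - 1 - 1))"
    "(\<Sum>k\<in>{k. g k \<noteq> 0}. g k * real (k - 1) * v ^ (k - 1 - 1)) \<le> real (max_degree g)"
proof -
  show "0 \<le> (\<Sum>k\<in>{k. g k \<noteq> 0}. g k * real (k - 1) * v ^ (k - 1 - 1))"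
    using dd_basic[OF g] v by (intro sum_nonneg) auto
  have "(\<Sum>k\<in>{k. g k \<noteq> 0}. g k * real (k - 1) * v ^ (k - 1 - 1))
     \<le> (\<Sum>k\<in>{k. g k \<noteq> 0}. g k * real (max_degree g))"
  proof (intro sum_mono)
    fix k assume k: "k \<in> {k. g k \<noteq> 0}"
    have "real (k - 1) * v ^ (k - 1 - 1) \<le> real (max_degree g) * 1"
      using dd_basic[OF g k] v by (intro mult_mono) (auto intro: power_le_one)
    then show "g k * real (k - 1) * v ^ (k - 1 - 1) \<le> g k * real (max_degree g)"
      using dd_basic[OF g k] by (simp add: mult.assoc mult_left_mono)
  qed
  also have "\<dots> = real (max_degree g)"
    using dd_sum1[OF g] by (simp add: sum_distrib_right[symmetric])
  finally show "(\<Sum>k\<in>{k. g k \<noteq> 0}. g k * real (k - 1) * v ^ (k - 1 - 1)) \<le> real (max_degree g)" .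
qed

lemma L2_bound:
  assumes g: "degree_distribution g" and v: "0 \<le> v" "v \<le> 1"
  shows "0 \<le> (\<Sum>k\<in>{k. g k \<noteq> 0}. g k * real (k - 1) * real (k - 1 - 1) * v ^ (k - 1 - 1 - 1))"
    "(\<Sum>k\<in>{k. g k \<noteq> 0}. g k * real (k - 1) * real (k - 1 - 1) * v ^ (k - 1 - 1 - 1)) \<le> (real (max_degree g))\<^sup>2"
proof -
  show "0 \<le> (\<Sum>k\<in>{k. g k \<noteq> 0}. g k * real (k - 1) * real (k - 1 - 1) * v ^ (k - 1 - 1 - 1))"
    using dd_basic[OF g] v by (intro sum_nonneg) auto
  have "(\<Sum>k\<in>{k. g k \<noteq> 0}. g k * real (k - 1) * real (k - 1 - 1) * v ^ (k - 1 - 1 - 1))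
     \<le> (\<Sum>k\<in>{k. g k \<noteq> 0}. g k * (real (max_degree g))\<^sup>2)"
  proof (intro sum_mono)
    fix k assume k: "k \<in> {k. g k \<noteq> 0}"
    have "real (k - 1) * real (k - 1 - 1) \<le> real (max_degree g) * real (max_degree g)"
      using dd_basic[OF g k] by (intro mult_mono) auto
    then have "real (k - 1) * real (k - 1 - 1) * v ^ (k - 1 - 1 - 1) \<le> (real (max_degree g))\<^sup>2 * 1"
      using dd_basic[OF g k] v by (intro mult_mono) (auto intro: power_le_one simp: power2_eq_square)
    then show "g k * real (k - 1) * real (k - 1 - 1) * v ^ (k - 1 - 1 - 1) \<le> g k * (real (max_degree g))\<^sup>2"
      using dd_basic[OF g k] by (simp add: mult.assoc mult_left_mono)
  qed
  also have "\<dots> = (real (max_degree g))\<^sup>2"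
    using dd_sum1[OF g] by (simp add: sum_distrib_right[symmetric])
  finally show "(\<Sum>k\<in>{k. g k \<noteq> 0}. g k * real (k - 1) * real (k - 1 - 1) * v ^ (k - 1 - 1 - 1)) \<le> (real (max_degree g))\<^sup>2" .
qed

lemma R1_bound:
  assumes g: "degree_distribution g" and y: "0 < y"
  shows "0 \<le> (\<Sum>k\<in>{k. g k \<noteq> 0}. g k * real (k - 1) * y ^ (k - 1 - 1))"
    "y * (\<Sum>k\<in>{k. g k \<noteq> 0}. g k * real (k - 1) * y ^ (k - 1 - 1)) \<le> real (max_degree g) * dd_eval g y"
proof -
  show "0 \<le> (\<Sum>k\<in>{k. g k \<noteq> 0}. g k * real (k - 1) * y ^ (k - 1 - 1))"
    using dd_basic[OF g] y by (intro sum_nonneg) auto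
  have "y * (\<Sum>k\<in>{k. g k \<noteq> 0}. g k * real (k - 1) * y ^ (k - 1 - 1))
     = (\<Sum>k\<in>{k. g k \<noteq> 0}. real (k - 1) * (g k * y ^ (k - 1)))"
    unfolding sum_distrib_left
  proof (intro sum.cong refl)
    fix k assume k: "k \<in> {k. g k \<noteq> 0}"
    obtain j where "k = Suc (Suc j)" using dd_basic(1)[OF g k] by (metis add_2_eq_Suc le_Suc_ex)
    then have "y ^ (k - 1) = y * y ^ (k - 1 - 1)" by simp
    then show "y * (g k * real (k - 1) * y ^ (k - 1 - 1)) = real (k - 1) * (g k * y ^ (k - 1))"
      by simp
  qed
  also have "\<dots> \<le> (\<Sum>k\<in>{k. g k \<noteq> 0}. real (max_degree g) * (g k * y ^ (k - 1)))"
    using dd_basic[OF g] y by (intro sum_mono mult_right_mono) (auto, meson diff_le_self le_trans)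
  also have "\<dots> = real (max_degree g) * dd_eval g y"
    unfolding dd_eval_def sum_distrib_left ..
  finally show "y * (\<Sum>k\<in>{k. g k \<noteq> 0}. g k * real (k - 1) * y ^ (k - 1 - 1)) \<le> real (max_degree g) * dd_eval g y" .
qed

lemma R2_bound:
  assumes g: "degree_distribution g" and y: "0 < y"
  shows "0 \<le> (\<Sum>k\<in>{k. g k \<noteq> 0}. g k * real (k - 1) * real (k - 1 - 1) * y ^ (k - 1 - 1 - 1))"
    "y\<^sup>2 * (\<Sum>k\<in>{k. g k \<noteq> 0}. g k * real (k - 1) * real (k - 1 - 1) * y ^ (k - 1 - 1 - 1)) \<le> (real (max_degree g))\<^sup>2 * dd_eval g y"
proof -
  show "0 \<le> (\<Sum>k\<in>{k. g k \<noteq> 0}. g k * real (k - 1) * real (k - 1 - 1) * y ^ (k - 1 - 1 - 1))"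
    using dd_basic[OF g] y by (intro sum_nonneg) auto
  have "y\<^sup>2 * (\<Sum>k\<in>{k. g k \<noteq> 0}. g k * real (k - 1) * real (k - 1 - 1) * y ^ (k - 1 - 1 - 1))
     \<le> (\<Sum>k\<in>{k. g k \<noteq> 0}. (real (max_degree g))\<^sup>2 * (g k * y ^ (k - 1)))"
    unfolding sum_distrib_left
  proof (intro sum_mono)
    fix k assume k: "k \<in> {k. g k \<noteq> 0}"
    have "y\<^sup>2 * (g k * real (k - 1) * real (k - 1 - 1) * y ^ (k - 1 - 1 - 1))
        = (real (k - 1) * real (k - 1 - 1)) * (g k * (y\<^sup>2 * y ^ (k - 1 - 1 - 1)))" by simp
    also have "\<dots> \<le> (real (k - 1) * real (k - 1 - 1)) * (g k * y ^ (k - 1))"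
    proof (cases "k = 2")
      case True then show ?thesis by simp
    next
      case False
      then have "k - 1 = 2 + (k - 1 - 1 - 1)" using dd_basic[OF g k] by simp
      then have "y ^ (k - 1) = y\<^sup>2 * y ^ (k - 1 - 1 - 1)" by (metis power_add)
      then show ?thesis by simp
    qed
    also have "\<dots> \<le> (real (max_degree g))\<^sup>2 * (g k * y ^ (k - 1))"
      using dd_basic[OF g k] y
      by (intro mult_right_mono) (auto simp: power2_eq_square intro!: mult_mono)
    finally show "y\<^sup>2 * (g k * real (k - 1) * real (k - 1 - 1) * y ^ (k - 1 - 1 - 1))
        \<le> (real (max_degree g))\<^sup>2 * (g k * y ^ (k - 1))" .
  qed
  also have "\<dots> = (real (max_degree g))\<^sup>2 * dd_eval g y"
    unfolding dd_eval_def sum_distrib_left ..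
  finally show "y\<^sup>2 * (\<Sum>k\<in>{k. g k \<noteq> 0}. g k * real (k - 1) * real (k - 1 - 1) * y ^ (k - 1 - 1 - 1)) \<le> (real (max_degree g))\<^sup>2 * dd_eval g y" .
qed

lemma R0_bound:
  assumes g: "degree_distribution g" and y: "0 \<le> y" "y \<le> 1"
  shows "0 \<le> dd_eval g y" "dd_eval g y \<le> 1"
proof -
  show "0 \<le> dd_eval g y" unfolding dd_eval_def using dd_basic[OF g] y by (intro sum_nonneg) auto
  have "dd_eval g y \<le> (\<Sum>k\<in>{k. g k \<noteq> 0}. g k)" unfolding dd_eval_def
    using dd_basic[OF g] y by (intro sum_mono) (auto intro!: mult_left_le power_le_one)
  then show "dd_eval g y \<le> 1" using dd_sum1[OF g] by simp
qed


theorem lemma3: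
  fixes xi a kv kc x :: real and lam rho :: "nat \<Rightarrow> real"
  assumes "0 < xi" "xi < 1"
    and "degree_distribution lam" "degree_distribution rho"
    and "1 / a = integral {0..1} (dd_eval rho)"
    and "real (max_degree lam) \<le> kv * a"
    and "real (max_degree rho) \<le> kc * a"
    and "0 < x" "x \<le> xi"
  shows "\<bar>deriv (deriv (\<lambda>t. dd_eval lam (1 - dd_eval rho (1 - t)))) x\<bar>
           \<le> kv\<^sup>2 * kc\<^sup>2 * (dd_eval rho (1 - x))\<^sup>2 * a ^ 4 / (1 - xi)\<^sup>2
             + kv * kc\<^sup>2 * dd_eval rho (1 - x) * a ^ 3 / (1 - xi)\<^sup>2"
proof -
  note gl = assms(3) and gr = assms(4)
  define SL where "SL = {k. lam k \<noteq> 0}"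
  define SR where "SR = {k. rho k \<noteq> 0}"
  have fL: "finite SL" and fR: "finite SR" using dd_sum1 gl gr SL_def SR_def by auto
  define u where "u t = 1 - (\<Sum>j\<in>SR. rho j * (1 - t) ^ (j - 1))" for t
  define L1 where "L1 v = (\<Sum>k\<in>SL. lam k * real (k - 1) * v ^ (k - 1 - 1))" for v
  define L2 where "L2 v = (\<Sum>k\<in>SL. lam k * real (k - 1) * real (k - 1 - 1) * v ^ (k - 1 - 1 - 1))" for v
  define R1 where "R1 y = (\<Sum>k\<in>SR. rho k * real (k - 1) * y ^ (k - 1 - 1))" for y
  define R2 where "R2 y = (\<Sum>k\<in>SR. rho k * real (k - 1) * real (k - 1 - 1) * y ^ (k - 1 - 1 - 1))" for y
  have feq: "(\<lambda>t. dd_eval lam (1 - dd_eval rho (1 - t))) =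
     (\<lambda>t. (\<Sum>k\<in>SL. lam k * (1 - (\<Sum>j\<in>SR. rho j * (1 - t) ^ (j - 1))) ^ (k - 1)))"
    unfolding dd_eval_def SL_def SR_def ..
  have d1: "deriv (\<lambda>t. dd_eval lam (1 - dd_eval rho (1 - t))) = (\<lambda>t. L1 (u t) * R1 (1 - t))"
    unfolding feq
  proof
    fix t show "deriv (\<lambda>t. \<Sum>k\<in>SL. lam k * (1 - (\<Sum>j\<in>SR. rho j * (1 - t) ^ (j - 1))) ^ (k - 1)) t
       = L1 (u t) * R1 (1 - t)"
      using DERIV_imp_deriv[OF f1[OF fL fR, where p=lam and m="\<lambda>k. k - 1" and q=rho and n="\<lambda>j. j - 1" and t=t]]
      unfolding L1_def R1_def u_def by simp
  qed
  have dL: "((\<lambda>t. L1 (u t)) has_real_derivative L2 (u t) * R1 (1 - t)) (at t)" for t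
    using f1[OF fL fR, where p="\<lambda>k. lam k * real (k - 1)" and m="\<lambda>k. k - 1 - 1" and q=rho and n="\<lambda>j. j - 1" and t=t]
    unfolding L1_def L2_def R1_def u_def by (simp add: mult.assoc)
  have a: "((\<lambda>t. 1 - t) has_real_derivative -1) (at t)" for t :: real
    by (auto intro!: derivative_eq_intros)
  have dR: "((\<lambda>t. R1 (1 - t)) has_real_derivative - R2 (1 - t)) (at t)" for t
    using DERIV_chain2[OF dsum[OF fR, where c="\<lambda>k. rho k * real (k - 1)" and m="\<lambda>k. k - 1 - 1"] a[of t]]
    unfolding R1_def R2_def by (simp add: mult.assoc)
  have d2: "deriv (deriv (\<lambda>t. dd_eval lam (1 - dd_eval rho (1 - t)))) x
     = L2 (u x) * R1 (1 - x) * R1 (1 - x) - L1 (u x) * R2 (1 - x)"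
    unfolding d1 using DERIV_imp_deriv[OF DERIV_mult[OF dL dR]] by simp
  define y where "y = 1 - x"
  have y: "0 < y" "y \<le> 1" "1 - xi \<le> y" using assms y_def by auto
  have uy: "u x = 1 - dd_eval rho y" unfolding u_def y_def dd_eval_def SR_def ..
  have R0: "0 \<le> dd_eval rho y" "dd_eval rho y \<le> 1" using R0_bound[OF gr] y by auto
  have u01: "0 \<le> u x" "u x \<le> 1" using uy R0 by auto
  have L1b: "0 \<le> L1 (u x)" "L1 (u x) \<le> real (max_degree lam)"
    unfolding L1_def SL_def using L1_bound[OF gl u01] by auto
  have L2b: "0 \<le> L2 (u x)" "L2 (u x) \<le> (real (max_degree lam))\<^sup>2"
    unfolding L2_def SL_def using L2_bound[OF gl u01] by auto
  have R1b: "0 \<le> R1 y" "y * R1 y \<le> real (max_degree rho) * dd_eval rho y"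
    unfolding R1_def SR_def using R1_bound[OF gr y(1)] by auto
  have R2b: "0 \<le> R2 y" "y\<^sup>2 * R2 y \<le> (real (max_degree rho))\<^sup>2 * dd_eval rho y"
    unfolding R2_def SR_def using R2_bound[OF gr y(1)] by auto
  define P where "P = dd_eval rho y"
  define dl where "dl = real (max_degree lam)"
  define dr where "dr = real (max_degree rho)"
  define e where "e = 1 - xi"
  have e: "0 < e" "e \<le> y" using assms y unfolding e_def by auto
  have dl: "0 \<le> dl" "dl \<le> kv * a" using assms dl_def by auto
  have dr: "0 \<le> dr" "dr \<le> kc * a" using assms dr_def by auto
  have P: "0 \<le> P" using R0 P_def by auto
  have R1y: "R1 y \<le> kc * a * P / e"
  proof -
    have "e * R1 y \<le> y * R1 y" using e R1b by (intro mult_right_mono) auto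
    also have "\<dots> \<le> dr * P" using R1b dr_def P_def by simp
    also have "\<dots> \<le> kc * a * P" using dr P by (intro mult_right_mono) auto
    finally show ?thesis using e by (simp add: field_simps)
  qed
  have R2y: "R2 y \<le> (kc * a)\<^sup>2 * P / e\<^sup>2"
  proof -
    have "e\<^sup>2 * R2 y \<le> y\<^sup>2 * R2 y" using e R2b by (intro mult_right_mono power_mono) auto
    also have "\<dots> \<le> dr\<^sup>2 * P" using R2b dr_def P_def by simp
    also have "\<dots> \<le> (kc * a)\<^sup>2 * P" using dr P by (intro mult_right_mono power_mono) auto
    finally show ?thesis using e by (simp add: field_simps)
  qed
  have A: "L2 (u x) * R1 y * R1 y \<le> (kv * a)\<^sup>2 * ((kc * a * P / e) * (kc * a * P / e))"
  proof -
    have l: "L2 (u x) \<le> (kv * a)\<^sup>2" using L2b dl dl_def by (meson order_trans power_mono)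
    have r: "R1 y * R1 y \<le> kc * a * P / e * (kc * a * P / e)"
      using R1y R1b dr P e by (rule_tac mult_mono) auto
    have "L2 (u x) * (R1 y * R1 y) \<le> (kv * a)\<^sup>2 * ((kc * a * P / e) * (kc * a * P / e))"
      using l r L2b R1b by (rule_tac mult_mono) auto
    then show ?thesis by (simp add: mult.assoc)
  qed
  have B: "L1 (u x) * R2 y \<le> (kv * a) * ((kc * a)\<^sup>2 * P / e\<^sup>2)"
    using L1b R2b R2y dl dl_def by (intro mult_mono) auto
  have A0: "0 \<le> L2 (u x) * R1 y * R1 y" using L2b R1b by auto
  have B0: "0 \<le> L1 (u x) * R2 y" using L1b R2b by auto
  have "\<bar>L2 (u x) * R1 y * R1 y - L1 (u x) * R2 y\<bar> \<le> L2 (u x) * R1 y * R1 y + L1 (u x) * R2 y"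
    using A0 B0 by linarith
  also have "\<dots> \<le> (kv * a)\<^sup>2 * ((kc * a * P / e) * (kc * a * P / e)) + (kv * a) * ((kc * a)\<^sup>2 * P / e\<^sup>2)"
    using A B by linarith
  also have "\<dots> = kv\<^sup>2 * kc\<^sup>2 * P\<^sup>2 * a ^ 4 / e\<^sup>2 + kv * kc\<^sup>2 * P * a ^ 3 / e\<^sup>2"
    using e by (simp add: field_simps power2_eq_square power3_eq_cube power4_eq_xxxx)
  finally show ?thesis unfolding d2 y_def[symmetric] P_def e_def .
qed

end
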